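(* Let $R$ be a commutative Noetherian ring with non-zero identity. Let $\mathcal{P}$ be a finite subset of $R$, and let $I$ be the ideal of $R$ generated by $\mathcal{P}$. Let $r \ge 0$ be an integer. Assume that there exist subsets $\mathcal{P}_0, \mathcal{P}_1, \ldots, \mathcal{P}_r$ of $\mathcal{P}$ such that: (SV1) $\mathcal{P} = \mathcal{P}_0 \cup \mathcal{P}_1 \cup \cdots \cup \mathcal{P}_r$; (SV2) $\mathcal{P}_0$ has exactly one element; (SV3) for each $\ell$ with $0 < \ell \le r$ and for every $a, a'' \in \mathcal{P}_\ell$ with $a \ne a''$, there exist an integer $\ell'$ with $0 \le \ell' < \ell$ and elements $a' \in \mathcal{P}_{\ell'}$ and $b \in I$ such that $a a'' = a' b$. Set $g_\ell = \sum_{a \in \mathcal{P}_\ell} a$ for $\ell = 0, 1, \ldots, r$. Then $J = (g_0, g_1, \ldots, g_r)$ is a reduction of $I$.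
   Context: An ideal $J \subseteq I$ is called a reduction of $I$ if there exists an integer $s \ge 1$ such that $I^{s+1} = J I^{s}$. *)

theory Defs
  imports "HOL-Algebra.Ideal_Product" "HOL-Algebra.Ring_Divisibility"
begin

primrec ideal_power :: "('a, 'b) ring_scheme \<Rightarrow> 'a set \<Rightarrow> nat \<Rightarrow> 'a set" where
  "ideal_power R I 0 = carrier R"
| "ideal_power R I (Suc n) = ideal_prod R I (ideal_power R I n)"

definition is_reduction :: "('a, 'b) ring_scheme \<Rightarrow> 'a set \<Rightarrow> 'a set \<Rightarrow> bool" where
  "is_reduction R J I \<longleftrightarrow> J \<subseteq> I \<and>
     (\<exists>s::nat. s \<ge> 1 \<and> ideal_power R I (s + 1) = ideal_prod R J (ideal_power R I s))"

end

theory Submission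
  imports Defs
begin

primrec lprod :: "('a, 'b) ring_scheme \<Rightarrow> 'a list \<Rightarrow> 'a" where
  "lprod R [] = \<one>\<^bsub>R\<^esub>"
| "lprod R (x # xs) = x \<otimes>\<^bsub>R\<^esub> lprod R xs"

context cring begin
lemma ideal_finsum: assumes "ideal T R" "finite A" "\<And>x. x\<in>A \<Longrightarrow> f x \<in> T"
  shows "finsum R f A \<in> T"
  using assms(2,3)
proof (induction A rule: finite_induct)
  case empty then show ?case using assms(1) by (simp add: additive_subgroup.zero_closed ideal.axioms(1))
next
  case (insert x F)
  have fc: "f \<in> F \<rightarrow> carrier R" using insert.prems ideal.Icarr[OF assms(1)] by auto
  have "f x \<in> carrier R" using insert.prems ideal.Icarr[OF assms(1)] by auto
  then show ?case using insert fc
    by (simp add: finsum_insert additive_subgroup.a_closed ideal.axioms(1) assms(1))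
qed

lemma mult_preimage_ideal: assumes T: "ideal T R" and c: "c \<in> carrier R"
  shows "ideal {y\<in>carrier R. y \<otimes> c \<in> T} R"
proof (rule idealI)
  show "ring R" by (rule ring_axioms)
  show "subgroup {y \<in> carrier R. y \<otimes> c \<in> T} (add_monoid R)"
  proof (rule add.subgroupI)
    show "{y \<in> carrier R. y \<otimes> c \<in> T} \<noteq> {}" using c T
      by (auto intro!: exI[of _ \<zero>] simp: additive_subgroup.zero_closed ideal.axioms(1))
  next
    fix a assume "a \<in> {y \<in> carrier R. y \<otimes> c \<in> T}"
    then show "\<ominus> a \<in> {y \<in> carrier R. y \<otimes> c \<in> T}" using c T
      by (simp add: l_minus additive_subgroup.a_inv_closed ideal.axioms(1))
  next
    fix a b assume "a \<in> {y \<in> carrier R. y \<otimes> c \<in> T}" "b \<in> {y \<in> carrier R. y \<otimes> c \<in> T}"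
    then show "a \<oplus> b \<in> {y \<in> carrier R. y \<otimes> c \<in> T}" using c T
      by (simp add: l_distr additive_subgroup.a_closed ideal.axioms(1))
  qed auto
next
  fix a x assume "a \<in> {y \<in> carrier R. y \<otimes> c \<in> T}" "x \<in> carrier R"
  then show "x \<otimes> a \<in> {y \<in> carrier R. y \<otimes> c \<in> T}" using c T
    by (simp add: m_assoc ideal.I_l_closed)
next
  fix a x assume "a \<in> {y \<in> carrier R. y \<otimes> c \<in> T}" "x \<in> carrier R"
  then show "a \<otimes> x \<in> {y \<in> carrier R. y \<otimes> c \<in> T}" using c T
    by (metis (no_types, lifting) mem_Collect_eq m_closed m_assoc m_comm ideal.I_l_closed)
qed

lemma lprod_closed: "set xs \<subseteq> carrier R \<Longrightarrow> lprod R xs \<in> carrier R"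
  by (induction xs) auto

lemma lprod_append: "set xs \<subseteq> carrier R \<Longrightarrow> set ys \<subseteq> carrier R \<Longrightarrow>
   lprod R (xs @ ys) = lprod R xs \<otimes> lprod R ys"
  by (induction xs) (auto simp: m_assoc lprod_closed)

lemma ideal_power_ideal: "ideal I R \<Longrightarrow> ideal (ideal_power R I k) R"
  by (induction k) (auto simp: oneideal ideal_prod_is_ideal)

lemma lprod_in_power: assumes "ideal I R" "set xs \<subseteq> I"
  shows "lprod R xs \<in> ideal_power R I (length xs)"
  using assms(2)
proof (induction xs)
  case Nil then show ?case by simp
next
  case (Cons x xs) then show ?case by (auto intro: ideal_prod.prod)
qed

lemma power_sub:
  assumes P: "P \<subseteq> carrier R" and T: "ideal T R"
  shows "c \<in> carrier R \<Longrightarrow> (\<And>xs. length xs = k \<Longrightarrow> set xs \<subseteq> P \<Longrightarrow> lprod R xs \<otimes> c \<in> T)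
    \<Longrightarrow> y \<in> ideal_power R (Idl P) k \<Longrightarrow> y \<otimes> c \<in> T"
proof (induction k arbitrary: c y)
  case 0
  then have "c \<in> T" using "0.prems"(2)[of "[]"] by simp
  then show ?case using 0 T by (simp add: ideal.I_l_closed)
next
  case (Suc k)
  have IdlP: "ideal (Idl P) R" using P by (simp add: genideal_ideal)
  have IK: "ideal (ideal_power R (Idl P) k) R" using IdlP by (rule ideal_power_ideal)
  from Suc.prems(3) have "y \<in> (Idl P) \<cdot> ideal_power R (Idl P) k" by simp
  then show ?case
  proof (induction y rule: ideal_prod.induct)
    case (prod i j)
    have jc: "j \<in> carrier R" using IK prod(2) by (simp add: ideal.Icarr)
    have ic: "i \<in> carrier R" using IdlP prod(1) by (simp add: ideal.Icarr)
    have "P \<subseteq> {y\<in>carrier R. y \<otimes> (j \<otimes> c) \<in> T}"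
    proof
      fix p assume p: "p \<in> P"
      have pc: "p \<in> carrier R" using p P by auto
      have "j \<otimes> (p \<otimes> c) \<in> T"
      proof (rule Suc.IH)
        show "p \<otimes> c \<in> carrier R" using pc Suc.prems by simp
        show "j \<in> ideal_power R (Idl P) k" by (rule prod(2))
        fix xs assume xs: "length xs = k" "set xs \<subseteq> P"
        have "lprod R (p # xs) \<otimes> c \<in> T" using Suc.prems(2)[of "p # xs"] xs p by simp
        moreover have "lprod R (p # xs) \<otimes> c = lprod R xs \<otimes> (p \<otimes> c)"
          using pc xs P Suc.prems(1) lprod_closed[of xs] by (simp add: m_ac)
        ultimately show "lprod R xs \<otimes> (p \<otimes> c) \<in> T" by simp
      qed
      then show "p \<in> {y\<in>carrier R. y \<otimes> (j \<otimes> c) \<in> T}"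
        using pc jc Suc.prems(1) by (simp add: m_ac)
    qed
    then have "Idl P \<subseteq> {y\<in>carrier R. y \<otimes> (j \<otimes> c) \<in> T}"
      by (intro genideal_minimal mult_preimage_ideal T) (use jc Suc.prems(1) in auto)
    then have "i \<otimes> (j \<otimes> c) \<in> T" using prod(1) by auto
    then show ?case using ic jc Suc.prems(1) by (simp add: m_assoc)
  next
    case (sum s1 s2)
    have "s1 \<in> carrier R" "s2 \<in> carrier R"
      using sum.hyps ideal_prod_in_carrier[OF IdlP IK] by auto
    then show ?case using sum Suc.prems(1) T
      by (simp add: l_distr additive_subgroup.a_closed ideal.axioms(1))
  qed
qed

lemma prod_mono_left: assumes "ideal J R" "ideal K R" "J \<subseteq> I"
  shows "J \<cdot> K \<subseteq> I \<cdot> K"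
proof
  fix s assume "s \<in> J \<cdot> K" then show "s \<in> I \<cdot> K"
    by (induction s rule: ideal_prod.induct) (use assms in \<open>auto intro: ideal_prod.intros\<close>)
qed

lemma ideal_diff_mem: assumes "ideal T R" "u \<in> carrier R" "v \<in> carrier R" "u \<oplus> v \<in> T" "v \<in> T"
  shows "u \<in> T"
proof -
  have "u = (u \<oplus> v) \<oplus> \<ominus> v" using assms(2,3) by (simp add: a_assoc r_neg)
  moreover have "\<ominus> v \<in> T" using assms by (simp add: additive_subgroup.a_inv_closed ideal.axioms(1))
  ultimately show ?thesis using assms by (metis additive_subgroup.a_closed ideal.axioms(1))
qed
end

lemma wsum_bound: "sum_list (map (\<lambda>x. (2::nat) ^ (r - lev x)) xs) \<le> length xs * 2 ^ r"
proof (induction xs)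
  case (Cons x xs)
  have h: "(2::nat) ^ (r - lev x) \<le> 2 ^ r" by (rule power_increasing) auto
  show ?case using add_mono[OF h Cons.IH] by simp
qed simp

theorem theorem1p1:
  fixes R (structure) and P :: "'a set" and I :: "'a set" and r :: nat
    and Ps :: "nat \<Rightarrow> 'a set" and g :: "nat \<Rightarrow> 'a" and J :: "'a set"
  assumes "cring R" and "noetherian_ring R" and "\<one>\<^bsub>R\<^esub> \<noteq> \<zero>\<^bsub>R\<^esub>"
    and "finite P" and "P \<subseteq> carrier R"
    and "I = Idl\<^bsub>R\<^esub> P"
    and "\<And>l. l \<le> r \<Longrightarrow> Ps l \<subseteq> P"
    and SV1: "P = (\<Union>l\<in>{0..r}. Ps l)"
    and SV2: "card (Ps 0) = 1"
    and SV3: "\<And>l a a''. 0 < l \<Longrightarrow> l \<le> r \<Longrightarrow> a \<in> Ps l \<Longrightarrow> a'' \<in> Ps l \<Longrightarrow> a \<noteq> a'' \<Longrightarrow>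
               \<exists>l' a' b. l' < l \<and> a' \<in> Ps l' \<and> b \<in> I \<and> a \<otimes>\<^bsub>R\<^esub> a'' = a' \<otimes>\<^bsub>R\<^esub> b"
    and "\<And>l. l \<le> r \<Longrightarrow> g l = (\<Oplus>\<^bsub>R\<^esub>a\<in>Ps l. a)"
    and "J = Idl\<^bsub>R\<^esub> (g ` {0..r})"
  shows "is_reduction R J I"
proof -
  interpret cring R by fact
  note finP = assms(4) and Pc = assms(5) and Idef = assms(6) and PsP = assms(7)
    and gdef = assms(11) and Jdef = assms(12)
  have II: "ideal I R" using Idef Pc by (simp add: genideal_ideal)
  have PI: "P \<subseteq> I" using Idef Pc by (simp add: genideal_self)
  have finPs: "finite (Ps l)" if "l \<le> r" for l using PsP[OF that] finP finite_subset by blast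
  have gI: "g l \<in> I" if "l \<le> r" for l
    unfolding gdef[OF that] by (rule ideal_finsum[OF II finPs[OF that]]) (use PsP[OF that] PI in auto)
  have JI: "J \<subseteq> I" unfolding Jdef using gI II by (intro genideal_minimal) auto
  have IJ: "ideal J R" unfolding Jdef using gI II ideal.Icarr[OF II] by (intro genideal_ideal) auto
  have gJ: "g l \<in> J" if "l \<le> r" for l
  proof -
    have "g ` {0..r} \<subseteq> carrier R" using gI ideal.Icarr[OF II] by auto
    then show ?thesis unfolding Jdef using genideal_self[of "g ` {0..r}"] that by auto
  qed
  obtain x0 where Ps0: "Ps 0 = {x0}" using SV2 card_1_singletonE by blast
  have x0P: "x0 \<in> P" using PsP[of 0] Ps0 by auto
  have x0J: "x0 \<in> J"
  proof -
    have "g 0 = x0" using gdef[of 0] Ps0 x0P Pc by (auto simp: finsum_singleton)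
    moreover have "g ` {0..r} \<subseteq> carrier R" using gI ideal.Icarr[OF II] by auto
    then have "g 0 \<in> J" unfolding Jdef using genideal_self[of "g ` {0..r}"] by auto
    ultimately show ?thesis by simp
  qed
  define lev where "lev x = (LEAST l. x \<in> Ps l)" for x
  have levP: "x \<in> Ps (lev x) \<and> lev x \<le> r" if xP: "x \<in> P" for x
  proof -
    obtain l where l: "l \<le> r" "x \<in> Ps l" using xP SV1 by auto
    have "x \<in> Ps (lev x)" unfolding lev_def using l(2) by (rule LeastI)
    moreover have "lev x \<le> l" unfolding lev_def using l(2) by (rule Least_le)
    ultimately show ?thesis using l by simp
  qed
  have levle: "lev x \<le> l" if "x \<in> Ps l" for x l unfolding lev_def using that by (rule Least_le)
  define n where "n = card P"
  define N where "N = Suc n"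
  define T where "T = J \<cdot> ideal_power R I n"
  have IPn: "ideal (ideal_power R I n) R" using II by (rule ideal_power_ideal)
  have IT: "ideal T R" unfolding T_def using IJ IPn by (rule ideal_prod_is_ideal)
  define f where "f xs = sum_list (map (\<lambda>x. (2::nat) ^ (r - lev x)) xs)" for xs
  have fb: "f xs \<le> length xs * 2 ^ r" for xs unfolding f_def by (rule wsum_bound)
  have key: "lprod R xs \<in> T" if "length xs = N" "set xs \<subseteq> P" for xs
    using that
  proof (induction "N * 2^r - f xs" arbitrary: xs rule: less_induct)
    case less
    have xsc: "set xs \<subseteq> carrier R" using less.prems Pc by auto
    show ?case
    proof (cases "\<exists>x\<in>set xs. x \<in> Ps 0")
      case True
      then have "x0 \<in> set xs" using Ps0 by auto
      then obtain us ws where xs: "xs = us @ x0 # ws" by (meson split_list)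
      have usc: "set us \<subseteq> carrier R" "set ws \<subseteq> carrier R" using xsc xs by auto
      have "lprod R xs = x0 \<otimes> lprod R (us @ ws)"
        using xs usc x0P Pc lprod_closed[OF usc(1)] lprod_closed[OF usc(2)]
        by (auto simp: lprod_append m_ac)
      moreover have "lprod R (us @ ws) \<in> ideal_power R I n"
      proof -
        have "length (us @ ws) = n" using less.prems xs N_def by simp
        moreover have "set (us @ ws) \<subseteq> I" using less.prems xs PI by auto
        ultimately show ?thesis using lprod_in_power[OF II, of "us @ ws"] by simp
      qed
      ultimately show ?thesis unfolding T_def using x0J by (auto intro: ideal_prod.prod)
    next
      case False
      have "card (set xs) \<le> card P" using less.prems finP by (simp add: card_mono)
      then have "\<not> distinct xs" using less.prems N_def n_def distinct_card by fastforce
      then obtain us vs ws a where xs: "xs = us @ [a] @ vs @ [a] @ ws"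
        using not_distinct_decomp by blast
      define rest where "rest = us @ vs @ ws"
      define m where "m = lprod R rest"
      have aP: "a \<in> P" using less.prems xs by auto
      have ac: "a \<in> carrier R" using aP Pc by auto
      have restP: "set rest \<subseteq> P" using less.prems xs rest_def by auto
      have restc: "set rest \<subseteq> carrier R" using restP Pc by auto
      have mc: "m \<in> carrier R" unfolding m_def using restc by (rule lprod_closed)
      have lenrest: "length rest = n - 1" "Suc (length rest) = n"
        using less.prems xs rest_def N_def by auto
      have fxs: "f xs = 2 * 2 ^ (r - lev a) + f rest" unfolding f_def xs rest_def by simp
      have lxs: "lprod R xs = a \<otimes> (a \<otimes> m)"
        unfolding xs m_def rest_def using xsc xs
        by (auto simp: lprod_append lprod_closed m_ac)
      define L where "L = lev a"
      have aL: "a \<in> Ps L" "L \<le> r" using levP[OF aP] L_def by auto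
      have L0: "0 < L" using aL False xs by (cases L) auto
      have am_pow: "a \<otimes> m \<in> ideal_power R I n"
        using lprod_in_power[OF II, of "a # rest"] restP aP PI lenrest by (auto simp: m_def)
      have terms: "x \<otimes> (a \<otimes> m) \<in> T" if x: "x \<in> Ps L - {a}" for x
      proof -
        obtain l' a' b where lab: "l' < L" "a' \<in> Ps l'" "b \<in> I" "a \<otimes> x = a' \<otimes> b"
          using SV3[OF L0 aL(2) aL(1), of x] x by auto
        have a'P: "a' \<in> P" using lab PsP[of l'] aL by auto
        have a'c: "a' \<in> carrier R" using a'P Pc by auto
        have xc: "x \<in> carrier R" using x PsP[OF aL(2)] Pc by auto
        have bc: "b \<in> carrier R" using lab(3) ideal.Icarr[OF II] by auto
        have "P \<subseteq> {y\<in>carrier R. y \<otimes> (a' \<otimes> m) \<in> T}"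
        proof
          fix p assume pP: "p \<in> P"
          have pc: "p \<in> carrier R" using pP Pc by auto
          define ys where "ys = p # a' # rest"
          have ysP: "set ys \<subseteq> P" "length ys = N"
            using pP a'P restP lenrest N_def ys_def by auto
          have "f xs < f ys"
          proof -
            have "lev a' < L" using levle[OF lab(2)] lab(1) by simp
            then have "Suc (r - L) \<le> r - lev a'" using aL by simp
            then have "(2::nat) ^ Suc (r - L) \<le> 2 ^ (r - lev a')" by (rule power_increasing) simp
            then have h1: "2 * (2::nat) ^ (r - lev a) \<le> 2 ^ (r - lev a')" using L_def by simp
            have h2: "(0::nat) < 2 ^ (r - lev p)" by simp
            have h3: "f ys = 2 ^ (r - lev p) + 2 ^ (r - lev a') + f rest" by (simp add: f_def ys_def)
            show ?thesis using fxs h1 h2 h3 by linarith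
          qed
          moreover have "f ys \<le> N * 2 ^ r" using fb[of ys] ysP by simp
          ultimately have "N * 2 ^ r - f ys < N * 2 ^ r - f xs" by simp
          then have "lprod R ys \<in> T" using less.hyps ysP by blast
          then show "p \<in> {y\<in>carrier R. y \<otimes> (a' \<otimes> m) \<in> T}"
            using pc by (simp add: ys_def m_def)
        qed
        then have "I \<subseteq> {y\<in>carrier R. y \<otimes> (a' \<otimes> m) \<in> T}"
          unfolding Idef using IT a'c mc by (intro genideal_minimal mult_preimage_ideal) auto
        then have "b \<otimes> (a' \<otimes> m) \<in> T" using lab(3) by auto
        moreover have "x \<otimes> (a \<otimes> m) = b \<otimes> (a' \<otimes> m)"
        proof -
          have "x \<otimes> (a \<otimes> m) = (a \<otimes> x) \<otimes> m" using xc ac mc by (simp add: m_ac)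
          also have "\<dots> = b \<otimes> (a' \<otimes> m)" using lab(4) a'c bc mc by (simp add: m_ac)
          finally show ?thesis .
        qed
        ultimately show ?thesis by simp
      qed
      have PsLc: "Ps L \<subseteq> carrier R" using PsP[OF aL(2)] Pc by auto
      have finL: "finite (Ps L - {a})" using finPs[OF aL(2)] by simp
      define S where "S = (\<Oplus>x\<in>Ps L - {a}. x \<otimes> (a \<otimes> m))"
      have ST: "S \<in> T" unfolding S_def by (rule ideal_finsum[OF IT finL terms])
      have Sc: "S \<in> carrier R" unfolding S_def using PsLc ac mc by (intro finsum_closed) auto
      have "g L \<otimes> (a \<otimes> m) = (\<Oplus>x\<in>Ps L. x \<otimes> (a \<otimes> m))"
        unfolding gdef[OF aL(2)] using finPs[OF aL(2)] PsLc ac mc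
        by (subst finsum_ldistr) auto
      also have "\<dots> = a \<otimes> (a \<otimes> m) \<oplus> S"
      proof -
        have "Ps L = insert a (Ps L - {a})" using aL by auto
        then have "(\<Oplus>x\<in>Ps L. x \<otimes> (a \<otimes> m)) = (\<Oplus>x\<in>insert a (Ps L - {a}). x \<otimes> (a \<otimes> m))"
          by simp
        also have "\<dots> = a \<otimes> (a \<otimes> m) \<oplus> S" unfolding S_def
          using finL PsLc ac mc by (subst finsum_insert) auto
        finally show ?thesis .
      qed
      finally have eq: "g L \<otimes> (a \<otimes> m) = a \<otimes> (a \<otimes> m) \<oplus> S" .
      have "g L \<otimes> (a \<otimes> m) \<in> T" unfolding T_def
        using gJ[OF aL(2)] am_pow by (auto intro: ideal_prod.prod)
      then have "a \<otimes> (a \<otimes> m) \<oplus> S \<in> T" using eq by simp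
      then have "a \<otimes> (a \<otimes> m) \<in> T" using ideal_diff_mem[OF IT _ Sc _ ST] ac mc by simp
      then show ?thesis using lxs by simp
    qed
  qed
  have sub1: "ideal_power R I N \<subseteq> T"
  proof
    fix y assume "y \<in> ideal_power R I N"
    moreover have "lprod R xs \<otimes> \<one> \<in> T" if "length xs = N" "set xs \<subseteq> P" for xs
      using key[OF that] that Pc lprod_closed[of xs] by auto
    ultimately have "y \<otimes> \<one> \<in> T" unfolding Idef
      using power_sub[OF Pc IT, of \<one> N] by blast
    moreover have "y \<in> carrier R" using \<open>y \<in> ideal_power R I N\<close>
      ideal.Icarr[OF ideal_power_ideal[OF II]] by blast
    ultimately show "y \<in> T" by simp
  qed
  have sub2: "T \<subseteq> ideal_power R I N"
    unfolding T_def N_def using prod_mono_left[OF IJ IPn JI] by simp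
  have n1: "n \<ge> 1"
  proof -
    have "Ps 0 \<subseteq> P" using PsP by simp
    then have "P \<noteq> {}" using Ps0 by auto
    then show ?thesis unfolding n_def using finP by (simp add: Suc_leI card_gt_0_iff)
  qed
  show ?thesis unfolding is_reduction_def
    using JI sub1 sub2 n1 by (intro conjI exI[of _ n]) (auto simp: T_def N_def)
qed

end
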